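(* Let $\beta\in[0,1)$. If $\lambda$ is an eigenvalue of $\Delta_\beta$, then $\lambda>0$.
   Context: Tree: for an integer $m\ge2$, $\mathbb{T}_m$ has vertices the root $\emptyset$ and all finite sequences $(\emptyset,a_1,\dots,a_k)$, $a_i\in\{0,\dots,m-1\}$; $|x|$ is the level, successors of $x$ are $(x,i)$, $\hat x$ is the immediate predecessor of $x\ne\emptyset$. A branch is an infinite sequence $(x_n)_{n\ge0}$ with $x_0=\emptyset$, $x_{n+1}$ a successor of $x_n$; $\partial\mathbb{T}_m$ is the set of branches; $\lim_{x\to y}u(x)=\lim_n u(x_n)$ for $y=(x_n)$. Operator: $p_\beta=1$ if $\beta=0$, $p_\beta=\beta/(1-\beta)$ if $\beta\in(0,1)$. $\Delta_\beta u(\emptyset)=\frac1m\sum_{i=0}^{m-1}u(\emptyset,i)-u(\emptyset)$ and, for $x\ne\emptyset$, $\Delta_\beta u(x)=\big(\beta u(\hat x)+\frac{1-\beta}{m}\sum_{i=0}^{m-1}u(x,i)-u(x)\big)p_\beta^{-|x|}$. Eigenvalues: $\lambda\in\mathbb{R}$ is an eigenvalue of $\Delta_\beta$ if there is a bounded $u:\mathbb{T}_m\to\mathbb{R}$, $u\not\equiv0$, with $-\Delta_\beta u=\lambda u$ on $\mathbb{T}_m$ and $\lim_{x\to y}u(x)=0$ for every $y\in\partial\mathbb{T}_m$. *)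

theory Defs
  imports Complex_Main
begin

text \<open>Vertices of the m-ary tree: the vertex (root, a_1, ..., a_k) is the list [a_1,...,a_k];
  the root is [], the successor (x,i) is x @ [i], the predecessor is butlast x,
  the level |x| is length x.\<close>

definition tree_verts :: "nat \<Rightarrow> nat list set" where
  "tree_verts m = {xs. \<forall>a\<in>set xs. a < m}"

definition pbeta :: "real \<Rightarrow> real" where
  "pbeta \<beta> = (if \<beta> = 0 then 1 else \<beta> / (1 - \<beta>))"

definition Delta_beta :: "nat \<Rightarrow> real \<Rightarrow> (nat list \<Rightarrow> real) \<Rightarrow> nat list \<Rightarrow> real" where
  "Delta_beta m \<beta> u x =
     (if x = [] then (\<Sum>i<m. u [i]) / real m - u []
      else (\<beta> * u (butlast x) + (1 - \<beta>) / real m * (\<Sum>i<m. u (x @ [i])) - u x)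
           * inverse (pbeta \<beta>) ^ length x)"

text \<open>A branch is determined by a sequence y with y n < m; its n-th vertex is [y 0, ..., y (n-1)].\<close>

definition is_eigenvalue :: "nat \<Rightarrow> real \<Rightarrow> real \<Rightarrow> bool" where
  "is_eigenvalue m \<beta> lam \<longleftrightarrow>
     (\<exists>u :: nat list \<Rightarrow> real.
        (\<exists>B. \<forall>x\<in>tree_verts m. \<bar>u x\<bar> \<le> B) \<and>
        (\<exists>x\<in>tree_verts m. u x \<noteq> 0) \<and>
        (\<forall>x\<in>tree_verts m. - Delta_beta m \<beta> u x = lam * u x) \<and>
        (\<forall>y :: nat \<Rightarrow> nat. (\<forall>n. y n < m) \<longrightarrow> (\<lambda>n. u (map y [0..<n])) \<longlonglongrightarrow> 0))"

end

theory Submission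
  imports Defs
begin

lemma pbeta_pos: "0 \<le> \<beta> \<Longrightarrow> \<beta> < 1 \<Longrightarrow> pbeta \<beta> > 0"
  by (auto simp: pbeta_def)

lemma step_lemma:
  fixes u :: "nat list \<Rightarrow> real"
  assumes m: "m \<ge> 2" and b0: "0 \<le> \<beta>" and b1: "\<beta> < 1" and lam: "lam \<le> 0"
    and eq: "- Delta_beta m \<beta> u x = lam * u x" and ux: "u x > 0"
    and par: "x = [] \<or> u (butlast x) \<le> u x"
  shows "\<exists>i<m. u (x @ [i]) \<ge> u x"
proof (rule ccontr)
  assume "\<not> ?thesis"
  hence lt: "\<And>i. i < m \<Longrightarrow> u (x @ [i]) < u x" by auto
  have "(\<Sum>i<m. u (x @ [i])) < (\<Sum>i<m. u x)"
    using m by (intro sum_strict_mono) (auto intro: lt simp: lessThan_empty_iff)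
  hence avg: "(\<Sum>i<m. u (x @ [i])) / real m < u x" using m by (simp add: divide_simps mult.commute)
  have rhs: "lam * u x \<le> 0" using lam ux by (simp add: mult_nonpos_nonneg)
  show False
  proof (cases "x = []")
    case True
    hence "Delta_beta m \<beta> u x < 0" using avg by (simp add: Delta_beta_def)
    thus False using eq rhs by linarith
  next
    case False
    hence pu: "u (butlast x) \<le> u x" using par by simp
    have e: "(1 - \<beta>) / real m * (\<Sum>i<m. u (x @ [i])) = (1 - \<beta>) * ((\<Sum>i<m. u (x @ [i])) / real m)"
      by simp
    have "(1 - \<beta>) * ((\<Sum>i<m. u (x @ [i])) / real m) < (1 - \<beta>) * u x"
      using avg b1 by (intro mult_strict_left_mono) auto
    moreover have "\<beta> * u (butlast x) \<le> \<beta> * u x" using pu b0 by (simp add: mult_left_mono)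
    ultimately have neg: "\<beta> * u (butlast x) + (1 - \<beta>) / real m * (\<Sum>i<m. u (x @ [i])) - u x < 0"
      unfolding e by (simp add: algebra_simps)
    have pos: "inverse (pbeta \<beta>) ^ length x > 0" using pbeta_pos[OF b0 b1] by simp
    have "Delta_beta m \<beta> u x < 0"
      using False mult_neg_pos[OF neg pos] by (simp add: Delta_beta_def)
    thus False using eq rhs by linarith
  qed
qed

lemma no_pos:
  fixes u :: "nat list \<Rightarrow> real"
  assumes m: "m \<ge> 2" and b0: "0 \<le> \<beta>" and b1: "\<beta> < 1" and lam: "lam \<le> 0"
    and eqs: "\<forall>x\<in>tree_verts m. - Delta_beta m \<beta> u x = lam * u x"
    and lim: "\<forall>y :: nat \<Rightarrow> nat. (\<forall>n. y n < m) \<longrightarrow> (\<lambda>n. u (map y [0..<n])) \<longlonglongrightarrow> 0"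
    and x0: "x0 \<in> tree_verts m" and ux0: "u x0 > 0"
  shows False
proof -
  define c where "c = u x0"
  define good where "good x \<longleftrightarrow> x \<in> tree_verts m \<and> u x \<ge> c \<and> (x = [] \<or> u (butlast x) \<le> u x)" for x
  have stp: "\<exists>i<m. good (x @ [i])" if g: "good x" for x
  proof -
    have gx: "x \<in> tree_verts m" "u x \<ge> c" "x = [] \<or> u (butlast x) \<le> u x"
      using g by (auto simp: good_def)
    have "u x > 0" using gx ux0 c_def by linarith
    then obtain i where i: "i < m" "u (x @ [i]) \<ge> u x"
      using step_lemma[OF m b0 b1 lam _ _ gx(3)] eqs gx(1) by blast
    have "good (x @ [i])" using i gx by (auto simp: good_def tree_verts_def)
    thus ?thesis using i by blast
  qed
  have start: "\<exists>x. good x"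
  proof -
    define K where "K = (LEAST k. u (take k x0) \<ge> u x0)"
    have ex: "u (take (length x0) x0) \<ge> u x0" by simp
    have K1: "u (take K x0) \<ge> u x0" unfolding K_def by (rule LeastI[where P="\<lambda>k. u (take k x0) \<ge> u x0", OF ex])
    have K2: "K \<le> length x0" unfolding K_def by (rule Least_le[where P="\<lambda>k. u (take k x0) \<ge> u x0", OF ex])
    have tr: "take K x0 \<in> tree_verts m" using x0
      by (auto simp: tree_verts_def dest: in_set_takeD)
    show ?thesis
    proof (cases K)
      case 0
      thus ?thesis using K1 tr by (auto simp: good_def c_def)
    next
      case (Suc j)
      have "\<not> u (take j x0) \<ge> u x0" unfolding K_def
        by (rule not_less_Least) (simp add: K_def[symmetric] Suc)
      moreover have "butlast (take K x0) = take j x0"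
        using Suc K2 by (simp add: butlast_take)
      ultimately show ?thesis using K1 tr by (intro exI[of _ "take K x0"]) (auto simp: good_def c_def)
    qed
  qed
  then obtain xs where xs: "good xs" by blast
  define sel where "sel x = (SOME i. i < m \<and> good (x @ [i]))" for x
  have sel: "sel x < m \<and> good (x @ [sel x])" if "good x" for x
    unfolding sel_def using stp[OF that] by (rule someI_ex) 
  define h where "h = rec_nat xs (\<lambda>_ x. x @ [sel x])"
  have h0: "h 0 = xs" and hS: "\<And>k. h (Suc k) = h k @ [sel (h k)]" by (simp_all add: h_def)
  have hg: "good (h k)" for k
    by (induction k) (use xs sel in \<open>auto simp: h0 hS\<close>)
  define L where "L = length xs"
  have hl: "length (h k) = L + k" for k
    by (induction k) (auto simp: h0 hS L_def)
  have pre: "take (L + k) (h (k + j)) = h k" for k j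
  proof (induction j)
    case 0 thus ?case using hl[of k] by simp
  next
    case (Suc j)
    have "h (k + Suc j) = h (k + j) @ [sel (h (k + j))]" by (simp add: hS)
    thus ?case using Suc hl[of "k + j"] by simp
  qed
  define y where "y n = h (Suc n) ! n" for n
  have ym: "y n < m" for n
  proof -
    have "h (Suc n) \<in> tree_verts m" using hg[of "Suc n"] by (simp add: good_def)
    moreover have "n < length (h (Suc n))" using hl[of "Suc n"] by simp
    ultimately show ?thesis unfolding y_def tree_verts_def by (auto simp: nth_mem)
  qed
  have mp: "map y [0..<n] = take n (h n)" for n
  proof (rule nth_equalityI)
    show "length (map y [0..<n]) = length (take n (h n))" using hl[of n] by simp
  next
    fix j assume j: "j < length (map y [0..<n])"
    hence jn: "j < n" by simp
    have "take (L + Suc j) (h (Suc j + (n - Suc j))) = h (Suc j)" by (rule pre)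
    hence "h (Suc j) = take (L + Suc j) (h n)" using jn by simp
    hence "y j = h n ! j" unfolding y_def by simp
    thus "map y [0..<n] ! j = take n (h n) ! j" using jn by simp
  qed
  have big: "u (map y [0..<n]) \<ge> c" if "n \<ge> L" for n
  proof -
    have "take (L + (n - L)) (h ((n - L) + L)) = h (n - L)" by (rule pre)
    moreover have "L + (n - L) = n" "(n - L) + L = n" using that by simp_all
    ultimately have "take n (h n) = h (n - L)" by simp
    thus ?thesis using mp hg[of "n - L"] by (simp add: good_def)
  qed
  have "(\<lambda>n. u (map y [0..<n])) \<longlonglongrightarrow> 0" using lim ym by blast
  hence "eventually (\<lambda>n. u (map y [0..<n]) < c) sequentially"
    using ux0 c_def by (intro order_tendstoD(2)) auto
  then obtain N where N: "\<And>n. n \<ge> N \<Longrightarrow> u (map y [0..<n]) < c"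
    by (auto simp: eventually_sequentially)
  have "u (map y [0..<max N L]) < c" by (rule N) simp
  moreover have "u (map y [0..<max N L]) \<ge> c" by (rule big) simp
  ultimately show False by simp
qed

lemma Delta_neg: "Delta_beta m \<beta> (\<lambda>x. - u x) x = - Delta_beta m \<beta> u x"
  by (simp add: Delta_beta_def sum_negf algebra_simps)

theorem lemma3p1:
  fixes m :: nat and \<beta> lam :: real
  assumes "m \<ge> 2" and "0 \<le> \<beta>" and "\<beta> < 1"
    and "is_eigenvalue m \<beta> lam"
  shows "lam > 0"
proof (rule ccontr)
  assume "\<not> lam > 0"
  hence lam: "lam \<le> 0" by simp
  obtain u where eqs: "\<forall>x\<in>tree_verts m. - Delta_beta m \<beta> u x = lam * u x"
    and lim: "\<forall>y :: nat \<Rightarrow> nat. (\<forall>n. y n < m) \<longrightarrow> (\<lambda>n. u (map y [0..<n])) \<longlonglongrightarrow> 0"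
    and nz: "\<exists>x\<in>tree_verts m. u x \<noteq> 0"
    using assms(4) unfolding is_eigenvalue_def by blast
  then obtain x0 where x0: "x0 \<in> tree_verts m" "u x0 \<noteq> 0" by blast
  show False
  proof (cases "u x0 > 0")
    case True
    show False by (rule no_pos[OF assms(1-3) lam eqs lim x0(1) True])
  next
    case False
    hence p: "(\<lambda>x. - u x) x0 > 0" using x0 by simp
    have eqs': "\<forall>x\<in>tree_verts m. - Delta_beta m \<beta> (\<lambda>x. - u x) x = lam * (\<lambda>x. - u x) x"
      using eqs by (simp add: Delta_neg)
    have lim': "\<forall>y :: nat \<Rightarrow> nat. (\<forall>n. y n < m) \<longrightarrow> (\<lambda>n. (\<lambda>x. - u x) (map y [0..<n])) \<longlonglongrightarrow> 0"
      using lim tendsto_minus by fastforce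
    show False by (rule no_pos[OF assms(1-3) lam eqs' lim' x0(1) p])
  qed
qed

end
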